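(* Let $n\ge1$ and let $\mathcal P(n-1,1,2)$ be the set of lattice paths with steps $(1,1)$ (up) and $(1,-1)$ (down) from $(0,0)$ to $(2n,2)$ (so with $n+1$ up steps and $n-1$ down steps); the steps occupy positions $0,1,\dots,2n-1$, the step in position $m$ starting at the vertex reached after $m$ steps. (1) For $k>1$, among the paths in $\mathcal P(n-1,1,2)$ that start with a down step and have exactly $k-1$ even down steps, the number having exactly $j$ even down steps starting on or below the $x$-axis is independent of $j$ for $j=1,\dots,k-1$, and equals $\frac{1}{k-1}\binom{n}{k}\binom{n-1}{k-2}$. (2) Among the paths in $\mathcal P(n-1,1,2)$ that start with an up step and have exactly $k$ even up steps ($k\ge1$), the number having exactly $j$ even up steps starting on or below the $x$-axis is independent of $j$ for $j=1,\dots,k$, and equals $\frac1k\binom{n-1}{k-1}\binom{n}{k-1}$.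
   Context: An even up (down) step is an up (down) step in an even position. A step starts on or below the $x$-axis if its initial vertex has $y$-coordinate $\le0$. *)

theory Defs
  imports Complex_Main
begin

text \<open>A lattice path is a list of steps: True = up step (1,1), False = down step (1,-1).
  Steps occupy positions 0,...,length p - 1.\<close>

definition height :: "bool list \<Rightarrow> nat \<Rightarrow> int" where
  "height p m = (\<Sum>i<m. if p ! i then 1 else -1)"

definition paths :: "nat \<Rightarrow> bool list set" where
  "paths n = {p. length p = 2 * n \<and> length (filter id p) = n + 1}"

definition even_down :: "bool list \<Rightarrow> nat set" where
  "even_down p = {m. m < length p \<and> even m \<and> \<not> p ! m}"

definition even_up :: "bool list \<Rightarrow> nat set" where
  "even_up p = {m. m < length p \<and> even m \<and> p ! m}"

definition low_steps :: "bool list \<Rightarrow> nat set" where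
  "low_steps p = {m. m < length p \<and> height p m \<le> 0}"

end

theory Submission
  imports Defs
begin

lemma height_0[simp]: "height p 0 = 0" by (simp add: height_def)

lemma height_Suc: "height p (Suc m) = height p m + (if p!m then 1 else -1)"
  by (simp add: height_def)

lemma height_parity: "even (height p m + int m)"
proof (induction m)
  case 0 then show ?case by simp
next
  case (Suc m) then show ?case by (auto simp: height_Suc)
qed

lemma height_take: "m \<le> length p \<Longrightarrow> height p m = 2 * int (length (filter id (take m p))) - int m"
proof (induction m)
  case 0 then show ?case by simp
next
  case (Suc m)
  then have "m < length p" by simp
  then show ?case using Suc by (auto simp: height_Suc take_Suc_conv_app_nth)
qed

lemma height_total: "p \<in> paths n \<Longrightarrow> height p (2*n) = 2"
  using height_take[of "2*n" p] by (simp add: paths_def)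

lemma height_rot1:
  assumes "r < length p" "i + r \<le> length p"
  shows "height (rotate r p) i = height p (i + r) - height p r"
  using assms
proof (induction i)
  case 0 then show ?case by simp
next
  case (Suc i)
  have "rotate r p ! i = p ! (i + r)" using Suc.prems by (simp add: nth_rotate add.commute)
  then show ?case using Suc by (simp add: height_Suc)
qed

lemma height_rot2:
  assumes "r < length p" "d \<le> r"
  shows "height (rotate r p) (length p - r + d) = height p (length p) - height p r + height p d"
  using assms
proof (induction d)
  case 0 then show ?case using height_rot1[of r p "length p - r"] by simp
next
  case (Suc d)
  have "rotate r p ! (length p - r + d) = p ! d"
  proof -
    have "(r + (length p - r + d)) mod length p = d" using Suc.prems by simp
    then show ?thesis using Suc.prems by (simp add: nth_rotate)
  qed
  then show ?case using Suc by (simp add: height_Suc)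
qed

definition Eb :: "bool \<Rightarrow> bool list \<Rightarrow> nat set" where
  "Eb b p = {m. m < length p \<and> even m \<and> p!m = b}"

lemma modB: assumes "t < (L::nat)" "r < L" shows "(r + (t + L - r) mod L) mod L = t"
proof -
  have "(r + (t + L - r) mod L) mod L = (r + (t + L - r)) mod L" by (simp add: mod_add_right_eq)
  also have "r + (t + L - r) = t + L" using assms by simp
  finally show ?thesis using assms by simp
qed

lemma modA: assumes "a < (L::nat)" "r < L" shows "((r + a) mod L + L - r) mod L = a"
proof -
  have "((r + a) mod L + L - r) = ((r + a) mod L + (L - r))" using assms by simp
  then have "((r + a) mod L + L - r) mod L = (r + a + (L - r)) mod L" by (simp add: mod_add_left_eq)
  also have "r + a + (L - r) = a + L" using assms by simp
  finally show ?thesis using assms by simp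
qed

lemma evmod: "even (L::nat) \<Longrightarrow> even (x mod L) \<longleftrightarrow> even x"
  by (simp add: dvd_mod_iff)

definition R :: "bool list \<Rightarrow> nat \<Rightarrow> nat \<Rightarrow> bool" where
  "R p r t = ((r \<le> t \<and> height p t \<le> height p r) \<or> (t < r \<and> height p t + 2 \<le> height p r))"

lemma low_rot:
  assumes "height p (length p) = 2" "r < length p" "i < length p"
  shows "height (rotate r p) i \<le> 0 \<longleftrightarrow> R p r ((r + i) mod length p)"
proof (cases "i + r < length p")
  case True
  then show ?thesis using height_rot1[of r p i] assms by (simp add: R_def add.commute)
next
  case False
  define d where "d = i + r - length p"
  have i: "i = length p - r + d" "d < r" using False assms by (auto simp: d_def)
  have m: "(r + i) mod length p = d"
  proof -
    have "r + i = length p + d" using i assms by simp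
    then show ?thesis using i assms by simp
  qed
  have "height (rotate r p) i = 2 - height p r + height p d" using height_rot2[of r p d] i assms by simp
  then show ?thesis using i unfolding m by (auto simp: R_def)
qed

lemma card_rot:
  assumes "height p (length p) = 2" "r < length p" "even r" "even (length p)"
  shows "card (Eb b (rotate r p) \<inter> low_steps (rotate r p)) = card {t \<in> Eb b p. R p r t}"
proof -
  let ?L = "length p"
  have "bij_betw (\<lambda>i. (r + i) mod ?L) (Eb b (rotate r p) \<inter> low_steps (rotate r p)) {t \<in> Eb b p. R p r t}"
  proof (rule bij_betw_byWitness[where f' = "\<lambda>t. (t + ?L - r) mod ?L"])
    show "\<forall>a\<in>Eb b (rotate r p) \<inter> low_steps (rotate r p). (((r + a) mod ?L) + ?L - r) mod ?L = a"
    proof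
      fix a assume "a \<in> Eb b (rotate r p) \<inter> low_steps (rotate r p)"
      then have a: "a < ?L" by (simp add: Eb_def)
      show "(((r + a) mod ?L) + ?L - r) mod ?L = a"
        using modA a assms by blast
    qed
    show "\<forall>t\<in>{t \<in> Eb b p. R p r t}. (r + (t + ?L - r) mod ?L) mod ?L = t"
    proof
      fix t assume "t \<in> {t \<in> Eb b p. R p r t}"
      then have t: "t < ?L" by (simp add: Eb_def)
      show "(r + (t + ?L - r) mod ?L) mod ?L = t"
        using modB t assms by blast
    qed
    show "(\<lambda>i. (r + i) mod ?L) ` (Eb b (rotate r p) \<inter> low_steps (rotate r p)) \<subseteq> {t \<in> Eb b p. R p r t}"
    proof
      fix t assume "t \<in> (\<lambda>i. (r + i) mod ?L) ` (Eb b (rotate r p) \<inter> low_steps (rotate r p))"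
      then obtain i where i: "i \<in> Eb b (rotate r p)" "i \<in> low_steps (rotate r p)" and t: "t = (r + i) mod ?L" by auto
      have il: "i < ?L" using i by (simp add: Eb_def)
      have "even t" using i(1) assms t by (simp add: Eb_def evmod)
      moreover have "p ! t = b" using i(1) il t by (simp add: Eb_def nth_rotate)
      moreover have "t < ?L" using t assms(2) by (metis gr_implies_not0 mod_less_divisor not_gr_zero)
      moreover have "R p r t" using i(2) low_rot[OF assms(1,2) il] t by (simp add: low_steps_def)
      ultimately show "t \<in> {t \<in> Eb b p. R p r t}" by (simp add: Eb_def)
    qed
    show "(\<lambda>t. (t + ?L - r) mod ?L) ` {t \<in> Eb b p. R p r t} \<subseteq> Eb b (rotate r p) \<inter> low_steps (rotate r p)"
    proof
      fix i assume "i \<in> (\<lambda>t. (t + ?L - r) mod ?L) ` {t \<in> Eb b p. R p r t}"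
      then obtain t where t: "t \<in> Eb b p" "R p r t" and i: "i = (t + ?L - r) mod ?L" by auto
      have tl: "t < ?L" using t by (simp add: Eb_def)
      have il: "i < ?L" using i assms(2) by (metis gr_implies_not0 mod_less_divisor not_gr_zero)
      have ti: "(r + i) mod ?L = t"
        using modB tl assms i by blast
      have "even (t + ?L - r)" using t assms by (simp add: Eb_def)
      then have "even i" using i assms by (simp add: evmod)
      moreover have "rotate r p ! i = b" using ti il t by (simp add: nth_rotate Eb_def)
      moreover have "height (rotate r p) i \<le> 0" using low_rot[OF assms(1,2) il] ti t by simp
      ultimately show "i \<in> Eb b (rotate r p) \<inter> low_steps (rotate r p)" using il
        by (simp add: Eb_def low_steps_def)
    qed
  qed
  then show ?thesis by (rule bij_betw_same_card)
qed

lemma rank_unique: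
  fixes key :: "'a \<Rightarrow> 'b::linorder"
  assumes "finite M" "inj_on key M" "1 \<le> j" "j \<le> card M"
  shows "card {r\<in>M. card {t\<in>M. key t \<le> key r} = j} = 1"
proof -
  define c where "c r = card {t\<in>M. key t \<le> key r}" for r
  have inj: "inj_on c M"
  proof (rule inj_onI)
    fix x y assume xy: "x \<in> M" "y \<in> M" "c x = c y"
    show "x = y"
    proof (rule ccontr)
      assume "x \<noteq> y"
      then have ne: "key x \<noteq> key y" using assms(2) xy by (meson inj_on_eq_iff)
      have mono: "c u < c v" if "u \<in> M" "v \<in> M" "key u < key v" for u v
      proof -
        have "{t\<in>M. key t \<le> key u} \<subset> {t\<in>M. key t \<le> key v}"
        proof
          show "{t\<in>M. key t \<le> key u} \<subseteq> {t\<in>M. key t \<le> key v}" using that by auto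
          have "v \<notin> {t\<in>M. key t \<le> key u}" using that by auto
          then show "{t\<in>M. key t \<le> key u} \<noteq> {t\<in>M. key t \<le> key v}" using that by auto
        qed
        then show ?thesis unfolding c_def by (rule psubset_card_mono[rotated]) (use assms(1) in auto)
      qed
      show False using ne mono[of x y] mono[of y x] xy by (metis less_irrefl linorder_neqE)
    qed
  qed
  have sub: "c ` M \<subseteq> {1..card M}"
  proof
    fix v assume "v \<in> c ` M"
    then obtain r where r: "r \<in> M" "v = c r" by auto
    have "r \<in> {t\<in>M. key t \<le> key r}" using r by auto
    moreover have "finite {t\<in>M. key t \<le> key r}" using assms(1) by simp
    ultimately have "c r \<ge> 1" unfolding c_def
      by (metis One_nat_def Suc_leI card_gt_0_iff empty_iff)
    moreover have "c r \<le> card M" unfolding c_def using assms(1) by (intro card_mono) auto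
    ultimately show "v \<in> {1..card M}" using r by auto
  qed
  have "card (c ` M) = card M" using inj by (rule card_image)
  then have eq: "c ` M = {1..card M}" using sub by (intro card_subset_eq) auto
  then obtain r0 where r0: "r0 \<in> M" "c r0 = j" using assms(3,4) by (metis atLeastAtMost_iff imageE)
  have "{r\<in>M. c r = j} = {r0}" using r0 inj by (auto dest: inj_onD)
  then show ?thesis unfolding c_def by simp
qed

definition key :: "bool list \<Rightarrow> nat \<Rightarrow> int" where
  "key p t = height p t * int (length p + 1) - int t"

lemma even_height: "even t \<Longrightarrow> even (height p t)"
  using height_parity[of p t] by auto

lemma lt_key:
  fixes a b c :: int
  assumes "a < b" "0 \<le> t" "t < c" "0 \<le> r" "r < c"
  shows "a * c - t < b * c - r"
proof -
  have "a \<le> b - 1" using assms by simp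
  then have "a * c \<le> (b - 1) * c" using assms by (intro mult_right_mono) auto
  then show ?thesis using assms by (simp add: algebra_simps)
qed

lemma R_key:
  assumes "t < length p" "r < length p" "even t" "even r"
  shows "R p r t \<longleftrightarrow> key p t \<le> key p r"
proof -
  let ?c = "int (length p + 1)"
  have et: "even (height p t)" and er: "even (height p r)" using assms even_height by auto
  consider "height p t < height p r" | "height p t = height p r" | "height p t > height p r" by linarith
  then show ?thesis
  proof cases
    case 1
    then have "height p t + 2 \<le> height p r" using et er 1 by (auto elim!: evenE)
    then have "R p r t" by (auto simp: R_def)
    moreover have "key p t < key p r" unfolding key_def using lt_key[OF 1, of "int t" ?c "int r"] assms by simp
    ultimately show ?thesis by simp
  next
    case 2 then show ?thesis by (auto simp: R_def key_def)
  next
    case 3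
    then have "\<not> R p r t" by (auto simp: R_def)
    moreover have "key p r < key p t" unfolding key_def using lt_key[OF 3, of "int r" ?c "int t"] assms by simp
    ultimately show ?thesis by simp
  qed
qed

lemma key_inj: "inj_on (key p) (Eb b p)"
proof (rule inj_onI)
  fix x y assume xy: "x \<in> Eb b p" "y \<in> Eb b p" "key p x = key p y"
  then have h: "x < length p" "y < length p" "even x" "even y" by (auto simp: Eb_def)
  have "R p x y" "R p y x" using R_key[OF h(1,2,3,4)] R_key[OF h(2,1,4,3)] xy(3) by auto
  then show "x = y" by (auto simp: R_def)
qed

lemma shift_card:
  assumes "r < (L::nat)"
  shows "card {i. i < L \<and> Q ((r + i) mod L)} = card {t. t < L \<and> Q t}"
proof -
  have "bij_betw (\<lambda>i. (r + i) mod L) {i. i < L \<and> Q ((r + i) mod L)} {t. t < L \<and> Q t}"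
  proof (rule bij_betw_byWitness[where f' = "\<lambda>t. (t + L - r) mod L"])
    show "\<forall>a\<in>{i. i < L \<and> Q ((r + i) mod L)}. ((r + a) mod L + L - r) mod L = a"
      using modA assms by blast
    show "\<forall>a\<in>{t. t < L \<and> Q t}. (r + (a + L - r) mod L) mod L = a"
      using modB assms by blast
    show "(\<lambda>i. (r + i) mod L) ` {i. i < L \<and> Q ((r + i) mod L)} \<subseteq> {t. t < L \<and> Q t}"
      using assms by auto
    show "(\<lambda>t. (t + L - r) mod L) ` {t. t < L \<and> Q t} \<subseteq> {i. i < L \<and> Q ((r + i) mod L)}"
      using assms modB by auto
  qed
  then show ?thesis by (rule bij_betw_same_card)
qed

lemma rot_mod: "rotate r p = rotate (r mod length p) p"
  by (rule rotate_conv_mod)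

lemma paths_rot:
  assumes "p \<in> paths n"
  shows "rotate r p \<in> paths n"
proof (cases "length p = 0")
  case True then show ?thesis using assms by simp
next
  case False
  let ?L = "length p"
  have r: "r mod ?L < ?L" using False by simp
  have "length (filter id (rotate r p)) = card {i. i < ?L \<and> rotate r p ! i}"
    by (simp add: length_filter_conv_card)
  also have "\<dots> = card {i. i < ?L \<and> p ! ((r mod ?L + i) mod ?L)}"
    by (rule arg_cong[where f=card]) (auto simp: nth_rotate mod_add_left_eq)
  also have "\<dots> = card {i. i < ?L \<and> p ! i}" by (rule shift_card[OF r])
  also have "\<dots> = length (filter id p)" by (simp add: length_filter_conv_card)
  finally show ?thesis using assms by (simp add: paths_def)
qed

lemma Eb_rot:
  assumes "even r" "even (length p)"
  shows "card (Eb b (rotate r p)) = card (Eb b p)"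
proof (cases "length p = 0")
  case True then show ?thesis by (simp add: Eb_def)
next
  case False
  let ?L = "length p"
  have r: "r mod ?L < ?L" using False by simp
  have er: "even (r mod ?L)" using assms by (simp add: evmod)
  have "Eb b (rotate r p) = {i. i < ?L \<and> (\<lambda>t. even t \<and> p ! t = b) ((r mod ?L + i) mod ?L)}"
    using er assms by (subst rot_mod) (auto simp: Eb_def nth_rotate evmod)
  then have "card (Eb b (rotate r p)) = card {t. t < ?L \<and> even t \<and> p ! t = b}"
    using shift_card[OF r, of "\<lambda>t. even t \<and> p ! t = b"] by simp
  then show ?thesis by (simp add: Eb_def conj_commute)
qed

lemma finite_paths: "finite (paths n)"
proof -
  have "paths n \<subseteq> {xs. set xs \<subseteq> UNIV \<and> length xs = 2 * n}" by (auto simp: paths_def)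
  then show ?thesis using finite_lists_length_eq[of "UNIV :: bool set" "2*n"] finite_subset by auto
qed

lemma main_count:
  assumes n: "n \<ge> 1" and j: "1 \<le> j" "j \<le> m"
  shows "n * card {p \<in> paths n. card (Eb b p) = m \<and> p ! 0 = b \<and> card (Eb b p \<inter> low_steps p) = j}
       = card {p \<in> paths n. card (Eb b p) = m}"
proof -
  define W where "W = {p \<in> paths n. card (Eb b p) = m}"
  define S where "S = {p \<in> paths n. card (Eb b p) = m \<and> p ! 0 = b \<and> card (Eb b p \<inter> low_steps p) = j}"
  define F where "F p = {r \<in> Eb b p. card {t \<in> Eb b p. key p t \<le> key p r} = j}" for p
  define A where "A = Sigma W F"
  define E where "E = {s. s < 2 * n \<and> even s}"
  have finW: "finite W" unfolding W_def using finite_paths by simp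
  have finEb: "finite (Eb b p)" for p by (simp add: Eb_def)
  have "card A = (\<Sum>p\<in>W. card (F p))" unfolding A_def using finW by (simp add: F_def finEb)
  also have "\<dots> = (\<Sum>p\<in>W. 1)"
  proof (rule sum.cong[OF refl])
    fix p assume "p \<in> W"
    then have "card (Eb b p) = m" by (simp add: W_def)
    then show "card (F p) = 1" unfolding F_def using rank_unique[OF finEb key_inj] j by simp
  qed
  finally have cA: "card A = card W" by simp
  have cE: "card E = n"
  proof -
    have "E = (\<lambda>i. 2 * i) ` {..<n}" unfolding E_def by (auto elim!: evenE)
    moreover have "inj_on (\<lambda>i. 2 * i) {..<n}" by (auto intro: inj_onI)
    ultimately show ?thesis by (simp add: card_image)
  qed
  have "bij_betw (\<lambda>(p, r). (rotate r p, r)) A (S \<times> E)"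
  proof (rule bij_betw_byWitness[where f' = "\<lambda>(v, s). (rotate ((2 * n - s) mod (2 * n)) v, s)"])
    show "\<forall>a\<in>A. (\<lambda>(v, s). (rotate ((2 * n - s) mod (2 * n)) v, s)) ((\<lambda>(p, r). (rotate r p, r)) a) = a"
    proof
      fix a assume "a \<in> A"
      then obtain p r where a: "a = (p, r)" "p \<in> W" "r \<in> Eb b p" by (auto simp: A_def F_def)
      have L: "length p = 2 * n" "r < 2 * n" using a by (auto simp: W_def paths_def Eb_def)
      have "rotate ((2 * n - r) mod (2 * n)) (rotate r p) = rotate ((2 * n - r) mod (2 * n) + r) p"
        by (simp add: rotate_rotate)
      also have "\<dots> = p"
      proof (rule rotate_id)
        show "((2 * n - r) mod (2 * n) + r) mod length p = 0" using L
          by (metis add_diff_inverse_nat mod_add_left_eq mod_self not_less_iff_gr_or_eq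
              order.asym add.commute)
      qed
      finally show "(\<lambda>(v, s). (rotate ((2 * n - s) mod (2 * n)) v, s)) ((\<lambda>(p, r). (rotate r p, r)) a) = a"
        using a by simp
    qed
    show "\<forall>a\<in>S \<times> E. (\<lambda>(p, r). (rotate r p, r)) ((\<lambda>(v, s). (rotate ((2 * n - s) mod (2 * n)) v, s)) a) = a"
    proof
      fix a assume "a \<in> S \<times> E"
      then obtain v s where a: "a = (v, s)" "v \<in> S" "s \<in> E" by auto
      have L: "length v = 2 * n" "s < 2 * n" using a by (auto simp: S_def paths_def E_def)
      have "rotate s (rotate ((2 * n - s) mod (2 * n)) v) = rotate (s + (2 * n - s) mod (2 * n)) v"
        by (simp add: rotate_rotate)
      also have "\<dots> = v"
      proof (rule rotate_id)
        show "(s + (2 * n - s) mod (2 * n)) mod length v = 0" using L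
          by (metis add_diff_inverse_nat mod_add_right_eq mod_self not_less_iff_gr_or_eq order.asym)
      qed
      finally show "(\<lambda>(p, r). (rotate r p, r)) ((\<lambda>(v, s). (rotate ((2 * n - s) mod (2 * n)) v, s)) a) = a"
        using a by simp
    qed
    show "(\<lambda>(p, r). (rotate r p, r)) ` A \<subseteq> S \<times> E"
    proof
      fix x assume "x \<in> (\<lambda>(p, r). (rotate r p, r)) ` A"
      then obtain p r where x: "x = (rotate r p, r)" and p: "p \<in> W" and r: "r \<in> F p"
        by (auto simp: A_def)
      have pp: "p \<in> paths n" "card (Eb b p) = m" using p by (auto simp: W_def)
      have L: "length p = 2 * n" using pp by (simp add: paths_def)
      have rr: "r < 2 * n" "even r" "p ! r = b" "card {t \<in> Eb b p. key p t \<le> key p r} = j"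
        using r L by (auto simp: F_def Eb_def)
      have h2: "height p (length p) = 2" using height_total[OF pp(1)] L by simp
      have "card (Eb b (rotate r p) \<inter> low_steps (rotate r p)) = card {t \<in> Eb b p. R p r t}"
        using card_rot[OF h2] rr L by simp
      also have "{t \<in> Eb b p. R p r t} = {t \<in> Eb b p. key p t \<le> key p r}"
        using R_key rr L by (auto simp: Eb_def)
      finally have c: "card (Eb b (rotate r p) \<inter> low_steps (rotate r p)) = j" using rr by simp
      have "rotate r p ! 0 = b" using rr L n by (simp add: nth_rotate)
      moreover have "card (Eb b (rotate r p)) = m" using Eb_rot[of r p b] rr L pp by simp
      ultimately have "rotate r p \<in> S" using paths_rot[OF pp(1)] c by (simp add: S_def)
      then show "x \<in> S \<times> E" using x rr by (simp add: E_def)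
    qed
    show "(\<lambda>(v, s). (rotate ((2 * n - s) mod (2 * n)) v, s)) ` (S \<times> E) \<subseteq> A"
    proof
      fix x assume "x \<in> (\<lambda>(v, s). (rotate ((2 * n - s) mod (2 * n)) v, s)) ` (S \<times> E)"
      then obtain v s where x: "x = (rotate ((2 * n - s) mod (2 * n)) v, s)" and v: "v \<in> S" and s: "s \<in> E"
        by auto
      define p where "p = rotate ((2 * n - s) mod (2 * n)) v"
      have vv: "v \<in> paths n" "card (Eb b v) = m" "v ! 0 = b" "card (Eb b v \<inter> low_steps v) = j"
        using v by (auto simp: S_def)
      have L: "length v = 2 * n" using vv by (simp add: paths_def)
      have ss: "s < 2 * n" "even s" using s by (auto simp: E_def)
      have Lp: "length p = 2 * n" using L by (simp add: p_def)
      have pp: "p \<in> paths n" using paths_rot[OF vv(1)] by (simp add: p_def)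
      have ev: "even ((2 * n - s) mod (2 * n))" using ss by (simp add: evmod)
      have cp: "card (Eb b p) = m" using Eb_rot[OF ev, of v b] L vv by (simp add: p_def)
      have vrot: "rotate s p = v"
      proof -
        have "rotate s p = rotate (s + (2 * n - s) mod (2 * n)) v" by (simp add: p_def rotate_rotate)
        also have "\<dots> = v"
        proof (rule rotate_id)
          show "(s + (2 * n - s) mod (2 * n)) mod length v = 0" using L ss
            by (metis add_diff_inverse_nat mod_add_right_eq mod_self not_less_iff_gr_or_eq order.asym)
        qed
        finally show ?thesis .
      qed
      have "p ! s = b"
      proof -
        have "v ! 0 = p ! ((s + 0) mod length p)" using vrot Lp n by (metis nth_rotate vv(3) length_rotate L
             gr_implies_not0 not_gr_zero ss(1) mult_is_0 zero_less_numeral less_nat_zero_code)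
        then show ?thesis using vv ss Lp by simp
      qed
      then have sE: "s \<in> Eb b p" using ss Lp by (simp add: Eb_def)
      have h2: "height p (length p) = 2" using height_total[OF pp] Lp by simp
      have "card (Eb b (rotate s p) \<inter> low_steps (rotate s p)) = card {t \<in> Eb b p. R p s t}"
        using card_rot[OF h2] ss Lp by simp
      also have "{t \<in> Eb b p. R p s t} = {t \<in> Eb b p. key p t \<le> key p s}"
        using R_key ss Lp by (auto simp: Eb_def)
      finally have "card {t \<in> Eb b p. key p t \<le> key p s} = j" using vrot vv by simp
      then have "s \<in> F p" using sE by (simp add: F_def)
      moreover have "p \<in> W" using pp cp by (simp add: W_def)
      ultimately show "x \<in> A" using x by (simp add: A_def p_def)
    qed
  qed
  then have "card A = card (S \<times> E)" by (rule bij_betw_same_card)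
  then have "card W = card S * n" using cA cE by (simp add: card_cartesian_product)
  then show ?thesis unfolding S_def W_def by (simp add: conj_commute conj_left_commute mult.commute)
qed

lemma card_evens: "card {i. i < 2 * n \<and> even i} = n"
proof -
  have "{i. i < 2 * n \<and> even i} = (\<lambda>i. 2 * i) ` {..<n}" by (auto elim!: evenE)
  moreover have "inj_on (\<lambda>i. 2 * i) {..<n}" by (auto intro: inj_onI)
  ultimately show ?thesis by (simp add: card_image)
qed

lemma card_odds: "card {i. i < 2 * n \<and> odd i} = n"
proof -
  have "{i. i < 2 * n \<and> odd i} = (\<lambda>i. 2 * i + 1) ` {..<n}" by (auto elim!: oddE)
  moreover have "inj_on (\<lambda>i. 2 * i + 1) {..<n}" by (auto intro: inj_onI)
  ultimately show ?thesis by (simp add: card_image)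
qed

lemma card_T:
  "card {p. length p = 2 * n \<and> card {i. i < 2 * n \<and> even i \<and> p ! i} = a
          \<and> card {i. i < 2 * n \<and> odd i \<and> p ! i} = c} = (n choose a) * (n choose c)"
proof -
  define Ev where "Ev = {i. i < 2 * n \<and> even i}"
  define Od where "Od = {i. i < 2 * n \<and> odd i}"
  define T where "T = {p. length p = 2 * n \<and> card {i. i < 2 * n \<and> even i \<and> p ! i} = a
          \<and> card {i. i < 2 * n \<and> odd i \<and> p ! i} = c}"
  define P1 where "P1 = {A. A \<subseteq> Ev \<and> card A = a}"
  define P2 where "P2 = {B. B \<subseteq> Od \<and> card B = c}"
  have "bij_betw (\<lambda>p. ({i. i < 2 * n \<and> even i \<and> p ! i}, {i. i < 2 * n \<and> odd i \<and> p ! i})) T (P1 \<times> P2)"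
  proof (rule bij_betw_byWitness[where f' = "\<lambda>(A, B). map (\<lambda>i. i \<in> A \<union> B) [0..<2 * n]"])
    show "\<forall>p\<in>T. (\<lambda>(A, B). map (\<lambda>i. i \<in> A \<union> B) [0..<2 * n])
        ({i. i < 2 * n \<and> even i \<and> p ! i}, {i. i < 2 * n \<and> odd i \<and> p ! i}) = p"
    proof
      fix p assume "p \<in> T"
      then have L: "length p = 2 * n" by (simp add: T_def)
      show "(\<lambda>(A, B). map (\<lambda>i. i \<in> A \<union> B) [0..<2 * n])
        ({i. i < 2 * n \<and> even i \<and> p ! i}, {i. i < 2 * n \<and> odd i \<and> p ! i}) = p"
        by (rule nth_equalityI) (use L in auto)
    qed
    show "\<forall>x\<in>P1 \<times> P2. (\<lambda>p. ({i. i < 2 * n \<and> even i \<and> p ! i}, {i. i < 2 * n \<and> odd i \<and> p ! i}))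
        ((\<lambda>(A, B). map (\<lambda>i. i \<in> A \<union> B) [0..<2 * n]) x) = x"
    proof
      fix x assume "x \<in> P1 \<times> P2"
      then obtain A B where x: "x = (A, B)" "A \<subseteq> Ev" "B \<subseteq> Od" by (auto simp: P1_def P2_def)
      have "{i. i < 2 * n \<and> even i \<and> map (\<lambda>i. i \<in> A \<union> B) [0..<2 * n] ! i} = A"
        using x by (auto simp: Ev_def Od_def)
      moreover have "{i. i < 2 * n \<and> odd i \<and> map (\<lambda>i. i \<in> A \<union> B) [0..<2 * n] ! i} = B"
        using x by (auto simp: Ev_def Od_def)
      ultimately show "(\<lambda>p. ({i. i < 2 * n \<and> even i \<and> p ! i}, {i. i < 2 * n \<and> odd i \<and> p ! i}))
        ((\<lambda>(A, B). map (\<lambda>i. i \<in> A \<union> B) [0..<2 * n]) x) = x" using x by simp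
    qed
    show "(\<lambda>p. ({i. i < 2 * n \<and> even i \<and> p ! i}, {i. i < 2 * n \<and> odd i \<and> p ! i})) ` T \<subseteq> P1 \<times> P2"
      by (auto simp: T_def P1_def P2_def Ev_def Od_def)
    show "(\<lambda>(A, B). map (\<lambda>i. i \<in> A \<union> B) [0..<2 * n]) ` (P1 \<times> P2) \<subseteq> T"
    proof
      fix p assume "p \<in> (\<lambda>(A, B). map (\<lambda>i. i \<in> A \<union> B) [0..<2 * n]) ` (P1 \<times> P2)"
      then obtain A B where p: "p = map (\<lambda>i. i \<in> A \<union> B) [0..<2 * n]" "A \<in> P1" "B \<in> P2" by auto
      have "{i. i < 2 * n \<and> even i \<and> p ! i} = A" using p by (auto simp: Ev_def Od_def P1_def P2_def)
      moreover have "{i. i < 2 * n \<and> odd i \<and> p ! i} = B" using p by (auto simp: Ev_def Od_def P1_def P2_def)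
      ultimately show "p \<in> T" using p by (simp add: T_def P1_def P2_def)
    qed
  qed
  then have "card T = card (P1 \<times> P2)" by (rule bij_betw_same_card)
  also have "\<dots> = card P1 * card P2" by (simp add: card_cartesian_product)
  also have "card P1 = n choose a" unfolding P1_def using n_subsets[of Ev a] card_evens by (simp add: Ev_def)
  also have "card P2 = n choose c" unfolding P2_def using n_subsets[of Od c] card_odds by (simp add: Od_def)
  finally show ?thesis by (simp add: T_def)
qed

lemma ups_split:
  assumes "length p = 2 * n"
  shows "length (filter id p) = card {i. i < 2 * n \<and> even i \<and> p ! i} + card {i. i < 2 * n \<and> odd i \<and> p ! i}"
proof -
  have "length (filter id p) = card {i. i < 2 * n \<and> p ! i}" using assms by (simp add: length_filter_conv_card)
  also have "{i. i < 2 * n \<and> p ! i} = {i. i < 2 * n \<and> even i \<and> p ! i} \<union> {i. i < 2 * n \<and> odd i \<and> p ! i}" by auto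
  also have "card \<dots> = card {i. i < 2 * n \<and> even i \<and> p ! i} + card {i. i < 2 * n \<and> odd i \<and> p ! i}"
    by (rule card_Un_disjoint) auto
  finally show ?thesis .
qed

lemma card_Eb_le: "length p = 2 * n \<Longrightarrow> card (Eb b p) \<le> n"
proof -
  assume L: "length p = 2 * n"
  have "Eb b p \<subseteq> {i. i < 2 * n \<and> even i}" using L by (auto simp: Eb_def)
  then show ?thesis using card_mono[of "{i. i < 2 * n \<and> even i}" "Eb b p"] card_evens by simp
qed

lemma count_up:
  assumes "m \<le> n"
  shows "card {p \<in> paths n. card (Eb True p) = m} = (n choose m) * (n choose (n + 1 - m))"
proof -
  have "{p \<in> paths n. card (Eb True p) = m} =
    {p. length p = 2 * n \<and> card {i. i < 2 * n \<and> even i \<and> p ! i} = m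
          \<and> card {i. i < 2 * n \<and> odd i \<and> p ! i} = n + 1 - m}"
  proof -
    have e: "Eb True p = {i. i < 2 * n \<and> even i \<and> p ! i}" if "length p = 2 * n" for p
      using that by (auto simp: Eb_def)
    show ?thesis using ups_split e assms by (auto simp: paths_def)
  qed
  then show ?thesis by (simp add: card_T)
qed

lemma count_down:
  assumes "m \<le> n"
  shows "card {p \<in> paths n. card (Eb False p) = m} = (n choose m) * (n choose (m + 1))"
proof -
  have "{p \<in> paths n. card (Eb False p) = m} =
    {p. length p = 2 * n \<and> card {i. i < 2 * n \<and> even i \<and> p ! i} = n - m
          \<and> card {i. i < 2 * n \<and> odd i \<and> p ! i} = m + 1}"
  proof -
    have e: "card (Eb False p) = n - card {i. i < 2 * n \<and> even i \<and> p ! i}" if "length p = 2 * n" for p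
    proof -
      have "Eb False p = {i. i < 2 * n \<and> even i} - {i. i < 2 * n \<and> even i \<and> p ! i}"
        using that by (auto simp: Eb_def)
      moreover have "card ({i. i < 2 * n \<and> even i} - {i. i < 2 * n \<and> even i \<and> p ! i})
          = card {i. i < 2 * n \<and> even i} - card {i. i < 2 * n \<and> even i \<and> p ! i}"
        by (rule card_Diff_subset) auto
      ultimately show ?thesis using card_evens[of n] by simp
    qed
    have le: "card {i. i < 2 * n \<and> even i \<and> p ! i} \<le> n" for p
      using card_mono[of "{i. i < 2 * n \<and> even i}" "{i. i < 2 * n \<and> even i \<and> p ! i}"] card_evens
      by fastforce
    show ?thesis
    proof (rule Collect_cong)
      fix p
      let ?a = "card {i. i < 2 * n \<and> even i \<and> p ! i}" and ?c = "card {i. i < 2 * n \<and> odd i \<and> p ! i}"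
      have l: "?a \<le> n" by (rule le)
      show "(p \<in> paths n \<and> card (Eb False p) = m) = (length p = 2 * n \<and> ?a = n - m \<and> ?c = m + 1)"
      proof (cases "length p = 2 * n")
        case True
        then show ?thesis using ups_split[OF True] e[OF True] l assms by (auto simp: paths_def)
      next
        case False then show ?thesis by (simp add: paths_def)
      qed
    qed
  qed
  then show ?thesis using assms by (simp add: card_T binomial_symmetric[symmetric])
qed

lemma W_empty: "m > n \<Longrightarrow> card {p \<in> paths n. card (Eb b p) = m} = 0"
proof -
  assume "m > n"
  have "{p \<in> paths n. card (Eb b p) = m} = {}"
  proof (rule ccontr)
    assume "{p \<in> paths n. card (Eb b p) = m} \<noteq> {}"
    then obtain p where "p \<in> paths n" "card (Eb b p) = m" by auto
    then show False using card_Eb_le[of p n b] \<open>m > n\<close> by (simp add: paths_def)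
  qed
  then show ?thesis by (simp only: card.empty)
qed

lemma part1:
  assumes n: "n \<ge> 1" and k: "k > 1" "1 \<le> j" "j \<le> k - 1"
  shows "real (card {p \<in> paths n. \<not> hd p \<and> card (even_down p) = k - 1
                         \<and> card (even_down p \<inter> low_steps p) = j})
            = real (n choose k) * real ((n - 1) choose (k - 2)) / real (k - 1)"
proof -
  have set: "{p \<in> paths n. \<not> hd p \<and> card (even_down p) = k - 1 \<and> card (even_down p \<inter> low_steps p) = j}
    = {p \<in> paths n. card (Eb False p) = k - 1 \<and> p ! 0 = False \<and> card (Eb False p \<inter> low_steps p) = j}"
  proof -
    have "even_down p = Eb False p" for p by (auto simp: even_down_def Eb_def)
    moreover have "p \<in> paths n \<Longrightarrow> hd p = p ! 0" for p using n by (intro hd_conv_nth) (auto simp: paths_def)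
    ultimately show ?thesis by auto
  qed
  define X where "X = card {p \<in> paths n. card (Eb False p) = k - 1 \<and> p ! 0 = False \<and> card (Eb False p \<inter> low_steps p) = j}"
  have main: "n * X = card {p \<in> paths n. card (Eb False p) = k - 1}"
    unfolding X_def using main_count[OF n k(2,3), of False] by simp
  have "(k - 1) * X = (n choose k) * ((n - 1) choose (k - 2))"
  proof (cases "k - 1 \<le> n")
    case True
    have cd: "card {p \<in> paths n. card (Eb False p) = k - 1} = (n choose (k - 1)) * (n choose (k - 1 + 1))"
      by (rule count_down[OF True])
    have kk: "k - 1 + 1 = k" using k by simp
    have eq: "n * X = (n choose (k - 1)) * (n choose k)" using main cd unfolding kk by simp
    have "n * ((k - 1) * X) = (k - 1) * (n * X)" by (simp only: mult.left_commute)
    also have "\<dots> = ((k - 1) * (n choose (k - 1))) * (n choose k)" unfolding eq by (simp only: mult.assoc)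
    also have "(k - 1) * (n choose (k - 1)) = n * ((n - 1) choose (k - 1 - 1))"
      by (rule times_binomial_minus1_eq) (use k in simp)
    also have "k - 1 - 1 = k - 2" by simp
    finally have "n * ((k - 1) * X) = n * ((n choose k) * ((n - 1) choose (k - 2)))"
      by (simp only: mult.assoc mult.commute mult.left_commute)
    then show ?thesis using n by simp
  next
    case False
    then have "X = 0" using main W_empty[of n "k - 1" False] n by simp
    moreover have "n choose k = 0" using False by simp
    ultimately show ?thesis by simp
  qed
  then have "real ((k - 1) * X) = real ((n choose k) * ((n - 1) choose (k - 2)))" by (simp only:)
  then have eq: "real (k - 1) * real X = real (n choose k) * real ((n - 1) choose (k - 2))"
    by (simp only: of_nat_mult)
  have pos: "real (k - 1) \<noteq> 0" using k by simp
  have "real X = real (n choose k) * real ((n - 1) choose (k - 2)) / real (k - 1)"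
    using eq pos by (simp add: eq_divide_eq mult.commute)
  then show ?thesis unfolding set X_def[symmetric] .
qed

lemma part2:
  assumes n: "n \<ge> 1" and k: "k \<ge> 1" "1 \<le> j" "j \<le> k"
  shows "real (card {p \<in> paths n. hd p \<and> card (even_up p) = k
                         \<and> card (even_up p \<inter> low_steps p) = j})
            = real ((n - 1) choose (k - 1)) * real (n choose (k - 1)) / real k"
proof -
  have set: "{p \<in> paths n. hd p \<and> card (even_up p) = k \<and> card (even_up p \<inter> low_steps p) = j}
    = {p \<in> paths n. card (Eb True p) = k \<and> p ! 0 = True \<and> card (Eb True p \<inter> low_steps p) = j}"
  proof -
    have "even_up p = Eb True p" for p by (auto simp: even_up_def Eb_def)
    moreover have "p \<in> paths n \<Longrightarrow> hd p = p ! 0" for p using n by (intro hd_conv_nth) (auto simp: paths_def)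
    ultimately show ?thesis by auto
  qed
  define X where "X = card {p \<in> paths n. card (Eb True p) = k \<and> p ! 0 = True \<and> card (Eb True p \<inter> low_steps p) = j}"
  have main: "n * X = card {p \<in> paths n. card (Eb True p) = k}"
    unfolding X_def using main_count[OF n k(2,3), of True] by simp
  have "k * X = ((n - 1) choose (k - 1)) * (n choose (k - 1))"
  proof (cases "k \<le> n")
    case True
    have sym: "n choose (n + 1 - k) = n choose (k - 1)"
    proof -
      have e1: "n + 1 - k = n - (k - 1)" using k True by simp
      have e2: "n choose (k - 1) = n choose (n - (k - 1))" by (rule binomial_symmetric) (use True k in simp)
      show ?thesis by (simp only: e1 e2)
    qed
    have eq: "n * X = (n choose k) * (n choose (k - 1))" using main count_up[OF True] unfolding sym by simp
    have "n * (k * X) = k * (n * X)" by (simp only: mult.left_commute)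
    also have "\<dots> = (k * (n choose k)) * (n choose (k - 1))" unfolding eq by (simp only: mult.assoc)
    also have "k * (n choose k) = n * ((n - 1) choose (k - 1))"
      by (rule times_binomial_minus1_eq) (use k in simp)
    finally have "n * (k * X) = n * (((n - 1) choose (k - 1)) * (n choose (k - 1)))"
      by (simp only: mult.assoc)
    then show ?thesis using n by simp
  next
    case False
    then have "X = 0" using main W_empty[of n k True] n by simp
    moreover have "(n - 1) choose (k - 1) = 0" using False n by simp
    ultimately show ?thesis by simp
  qed
  then have "real (k * X) = real (((n - 1) choose (k - 1)) * (n choose (k - 1)))" by (simp only:)
  then have eq: "real k * real X = real ((n - 1) choose (k - 1)) * real (n choose (k - 1))"
    by (simp only: of_nat_mult)
  have pos: "real k \<noteq> 0" using k by simp
  have "real X = real ((n - 1) choose (k - 1)) * real (n choose (k - 1)) / real k"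
    using eq pos by (simp add: eq_divide_eq mult.commute)
  then show ?thesis unfolding set X_def[symmetric] .
qed

theorem theorem12:
  fixes n :: nat
  assumes "n \<ge> 1"
  shows "(\<forall>k j. k > 1 \<and> 1 \<le> j \<and> j \<le> k - 1 \<longrightarrow>
            real (card {p \<in> paths n. \<not> hd p \<and> card (even_down p) = k - 1
                         \<and> card (even_down p \<inter> low_steps p) = j})
            = real (n choose k) * real ((n - 1) choose (k - 2)) / real (k - 1))
       \<and> (\<forall>k j. k \<ge> 1 \<and> 1 \<le> j \<and> j \<le> k \<longrightarrow>
            real (card {p \<in> paths n. hd p \<and> card (even_up p) = k
                         \<and> card (even_up p \<inter> low_steps p) = j})
            = real ((n - 1) choose (k - 1)) * real (n choose (k - 1)) / real k)"
  using part1[OF assms] part2[OF assms] by blast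

end
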